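(* Let $T$ be a tree of diameter $d$ on $n$ vertices with maximum Wiener index. Let $x$ be a special vertex of $T$ and let $T_1,T_2$ be components of $T-x$ such that each of them contains exactly one broom vertex of $T$ and $d(y,y')<d$ for all leaves $y\in V(T_1)$, $y'\in V(T_2)$. Let $y_1\in V(T_1)$, $y_2\in V(T_2)$ be leaves of $T$, $y_1'$ the broom vertex adjacent to $y_1$, $p=d(x,y_1)=d(x,y_2)$, and $t_i$ the number of leaves of $T$ in $T_i$ ($i\in\{1,2\}$). Let $T'=T_2\xrightarrow{T} y_1'$. If $n\geq 1636$, $p\leq 4\sqrt{\frac{n-1}{2}}-3$ and $W(T)\geq W(T')$, then $$t_1\geq \left\lceil\sqrt{\frac{n-1}{2}}\right\rceil-1 \text{ if } t_1=t_2, \qquad t_1\geq \left\lceil\sqrt{\frac{n-\frac12}{2}}-\frac12\right\rceil \text{ if } t_1=t_2+1.$$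
   Context: All graphs are finite and simple; $d(u,v)$ denotes distance and $W(G)=\sum_{\{u,v\}\subseteq V(G)} d(u,v)$ is the Wiener index. A tree $T$ of order $n$ and diameter $d$ has maximum Wiener index if $W(T')\leq W(T)$ for every tree $T'$ of order $n$ and diameter $d$. A leaf is a vertex of degree $1$; a broom vertex of $T$ is a vertex adjacent to a leaf of $T$. A vertex $x$ of a tree $T$ of diameter $d$ is special if $\deg(x)\geq 3$ and there exist components $T_1,T_2$ of $T-x$ such that each contains exactly one broom vertex of $T$ and $d(y,y')<d$ for all leaves $y\in V(T_1)$, $y'\in V(T_2)$. For such $x,T_1,T_2$ and the broom vertex $y_1'$ of $T_1$, the tree $T_2\xrightarrow{T} y_1'$ is obtained from $T$ by deleting all vertices of $T_2$ and attaching $|V(T_2)|$ new leaves to $y_1'$. *)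

theory Defs
  imports Complex_Main
begin

definition sgraph :: "'a set \<Rightarrow> 'a set set \<Rightarrow> bool" where
  "sgraph V E \<longleftrightarrow> finite V \<and> (\<forall>e\<in>E. \<exists>u v. e = {u, v} \<and> u \<noteq> v \<and> u \<in> V \<and> v \<in> V)"

definition walk :: "'a set \<Rightarrow> 'a set set \<Rightarrow> 'a list \<Rightarrow> bool" where
  "walk V E xs \<longleftrightarrow> xs \<noteq> [] \<and> set xs \<subseteq> V \<and>
     (\<forall>i. Suc i < length xs \<longrightarrow> {xs ! i, xs ! Suc i} \<in> E)"

definition connected_graph :: "'a set \<Rightarrow> 'a set set \<Rightarrow> bool" where
  "connected_graph V E \<longleftrightarrow>
     (\<forall>u\<in>V. \<forall>v\<in>V. \<exists>xs. walk V E xs \<and> hd xs = u \<and> last xs = v)"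

definition is_tree :: "'a set \<Rightarrow> 'a set set \<Rightarrow> bool" where
  "is_tree V E \<longleftrightarrow> sgraph V E \<and> V \<noteq> {} \<and> connected_graph V E \<and> card E = card V - 1"

definition gdist :: "'a set \<Rightarrow> 'a set set \<Rightarrow> 'a \<Rightarrow> 'a \<Rightarrow> nat" where
  "gdist V E u v = (LEAST k. \<exists>xs. walk V E xs \<and> hd xs = u \<and> last xs = v \<and> length xs = Suc k)"

definition wiener :: "'a set \<Rightarrow> 'a set set \<Rightarrow> nat" where
  "wiener V E = (\<Sum>u\<in>V. \<Sum>v\<in>V. gdist V E u v) div 2"

definition diameter :: "'a set \<Rightarrow> 'a set set \<Rightarrow> nat" where
  "diameter V E = Max {gdist V E u v | u v. u \<in> V \<and> v \<in> V}"

definition degree :: "'a set \<Rightarrow> 'a set set \<Rightarrow> 'a \<Rightarrow> nat" where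
  "degree V E v = card {u \<in> V. {u, v} \<in> E}"

definition leaf :: "'a set \<Rightarrow> 'a set set \<Rightarrow> 'a \<Rightarrow> bool" where
  "leaf V E v \<longleftrightarrow> v \<in> V \<and> degree V E v = 1"

definition broom_vertex :: "'a set \<Rightarrow> 'a set set \<Rightarrow> 'a \<Rightarrow> bool" where
  "broom_vertex V E v \<longleftrightarrow> v \<in> V \<and> (\<exists>y. leaf V E y \<and> {v, y} \<in> E)"

text \<open>Maximum Wiener index among all trees of the same order and diameter
  (every finite tree is isomorphic to one on a set of naturals).\<close>
definition max_wiener_tree :: "'a set \<Rightarrow> 'a set set \<Rightarrow> bool" where
  "max_wiener_tree V E \<longleftrightarrow> is_tree V E \<and>
     (\<forall>(V'::nat set) E'. is_tree V' E' \<and> card V' = card V \<and> diameter V' E' = diameter V E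
        \<longrightarrow> wiener V' E' \<le> wiener V E)"

definition comp_minus :: "'a set \<Rightarrow> 'a set set \<Rightarrow> 'a \<Rightarrow> 'a \<Rightarrow> 'a set" where
  "comp_minus V E x w = {u. \<exists>xs. walk V E xs \<and> hd xs = w \<and> last xs = u \<and> x \<notin> set xs}"

definition components_minus :: "'a set \<Rightarrow> 'a set set \<Rightarrow> 'a \<Rightarrow> 'a set set" where
  "components_minus V E x = {comp_minus V E x w | w. w \<in> V - {x}}"

definition special_pair :: "'a set \<Rightarrow> 'a set set \<Rightarrow> 'a \<Rightarrow> 'a set \<Rightarrow> 'a set \<Rightarrow> bool" where
  "special_pair V E x T1 T2 \<longleftrightarrow>
     T1 \<in> components_minus V E x \<and> T2 \<in> components_minus V E x \<and> T1 \<noteq> T2 \<and>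
     card {v \<in> T1. broom_vertex V E v} = 1 \<and> card {v \<in> T2. broom_vertex V E v} = 1 \<and>
     (\<forall>y\<in>T1. \<forall>y'\<in>T2. leaf V E y \<longrightarrow> leaf V E y' \<longrightarrow> gdist V E y y' < diameter V E)"

definition special_vertex :: "'a set \<Rightarrow> 'a set set \<Rightarrow> 'a \<Rightarrow> bool" where
  "special_vertex V E x \<longleftrightarrow> x \<in> V \<and> degree V E x \<ge> 3 \<and>
     (\<exists>T1 T2. special_pair V E x T1 T2)"

text \<open>The tree T2 -> y1': delete T2 and attach |V(T2)| new leaves to y1'.
  Up to isomorphism we reuse the vertices of T2 as the new leaves.\<close>
definition move_edges :: "'a set set \<Rightarrow> 'a set \<Rightarrow> 'a \<Rightarrow> 'a set set" where
  "move_edges E T2 y = {e \<in> E. e \<inter> T2 = {}} \<union> {{y, v} | v. v \<in> T2}"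

end

theory Submission
  imports Defs
begin



lemma walk_alt: "walk V E xs \<longleftrightarrow> xs \<noteq> [] \<and> set xs \<subseteq> V \<and> successively (\<lambda>a b. {a,b} \<in> E) xs"
  by (simp add: walk_def successively_conv_nth)

lemma walk_single[simp]: "walk V E [a] \<longleftrightarrow> a \<in> V"
  by (simp add: walk_alt)

lemma walk_Cons2[simp]: "walk V E (a # b # xs) \<longleftrightarrow> a \<in> V \<and> {a,b} \<in> E \<and> walk V E (b # xs)"
  by (auto simp: walk_alt)

lemma walk_append:
  assumes "walk V E xs" "walk V E ys" "{last xs, hd ys} \<in> E"
  shows "walk V E (xs @ ys)"
  using assms by (auto simp: walk_alt successively_append_iff)

lemma walk_join:
  assumes "walk V E xs" "walk V E ys" "last xs = hd ys"
  shows "walk V E (xs @ tl ys)"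
proof (cases "tl ys = []")
  case True then show ?thesis using assms by simp
next
  case False
  then obtain b zs where ys: "ys = hd ys # b # zs" using assms(2) unfolding walk_def
    by (metis list.collapse)
  have "{last xs, hd (tl ys)} \<in> E" using assms ys by (metis list.sel(1) list.sel(3) walk_Cons2)
  moreover have "walk V E (tl ys)" using assms ys by (metis list.sel(3) walk_Cons2)
  ultimately show ?thesis using walk_append assms(1) by blast
qed

lemma walk_rev: "walk V E xs \<Longrightarrow> walk V E (rev xs)"
  by (auto simp: walk_alt insert_commute)

lemma walk_take: "walk V E xs \<Longrightarrow> 0 < k \<Longrightarrow> walk V E (take k xs)"
  unfolding walk_def by (auto dest: in_set_takeD)

lemma walk_drop: "walk V E xs \<Longrightarrow> k < length xs \<Longrightarrow> walk V E (drop k xs)"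
  unfolding walk_def by (auto dest: in_set_dropD)

lemma walk_edge: "walk V E xs \<Longrightarrow> Suc i < length xs \<Longrightarrow> {xs ! i, xs ! Suc i} \<in> E"
  unfolding walk_def by blast

lemma walk_mono: "walk V E xs \<Longrightarrow> E \<subseteq> E' \<Longrightarrow> walk V E' xs"
  unfolding walk_def by blast

lemma sgraph_edge: "sgraph V E \<Longrightarrow> {a,b} \<in> E \<Longrightarrow> a \<in> V \<and> b \<in> V \<and> a \<noteq> b"
proof -
  assume s: "sgraph V E" and e: "{a,b} \<in> E"
  then obtain u v where "{a,b} = {u,v}" "u \<noteq> v" "u \<in> V" "v \<in> V" unfolding sgraph_def by blast
  then show ?thesis by (auto simp: doubleton_eq_iff)
qed

lemma sgraph_finE: "sgraph V E \<Longrightarrow> finite E"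
proof -
  assume s: "sgraph V E"
  have "E \<subseteq> Pow V"
  proof
    fix e assume "e \<in> E"
    then obtain u v where "e = {u,v}" "u \<in> V" "v \<in> V" using s unfolding sgraph_def by blast
    then show "e \<in> Pow V" by auto
  qed
  moreover have "finite V" using s unfolding sgraph_def by blast
  ultimately show ?thesis using finite_subset by auto
qed

locale cgraph =
  fixes V :: "'a set" and E :: "'a set set"
  assumes sg: "sgraph V E" and conn: "connected_graph V E"
begin

abbreviation "D \<equiv> gdist V E"

lemma finV: "finite V" using sg unfolding sgraph_def by blast
lemma finE: "finite E" using sgraph_finE[OF sg] .
lemma edgeD: "{a,b} \<in> E \<Longrightarrow> a \<in> V \<and> b \<in> V \<and> a \<noteq> b" using sgraph_edge[OF sg] .

lemma walk_set: "walk V E xs \<Longrightarrow> a \<in> set xs \<Longrightarrow> a \<in> V" unfolding walk_def by blast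

lemma dist_witness:
  assumes "u \<in> V" "v \<in> V"
  shows "\<exists>xs. walk V E xs \<and> hd xs = u \<and> last xs = v \<and> length xs = Suc (D u v)"
proof -
  obtain xs where "walk V E xs" "hd xs = u" "last xs = v" using conn assms unfolding connected_graph_def by blast
  then have ex: "\<exists>k xs. walk V E xs \<and> hd xs = u \<and> last xs = v \<and> length xs = Suc k"
    by (metis Suc_pred length_greater_0_conv walk_def)
  show ?thesis unfolding gdist_def using LeastI_ex[OF ex] .
qed

lemma dist_le:
  assumes "walk V E xs" "hd xs = u" "last xs = v"
  shows "D u v \<le> length xs - 1"
proof -
  have "length xs = Suc (length xs - 1)" using assms(1) unfolding walk_def by simp
  then show ?thesis unfolding gdist_def using assms by (intro Least_le) metis
qed

lemma dist_self[simp]: "u \<in> V \<Longrightarrow> D u u = 0"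
  using dist_le[of "[u]" u u] by simp

lemma dist_sym: assumes "u \<in> V" "v \<in> V" shows "D u v = D v u"
proof -
  have le: "D a b \<le> D b a" if ab: "a \<in> V" "b \<in> V" for a b
  proof -
    obtain xs where "walk V E xs" "hd xs = b" "last xs = a" "length xs = Suc (D b a)"
      using dist_witness[OF ab(2) ab(1)] by blast
    then show ?thesis using dist_le[of "rev xs" a b] walk_rev[of V E xs]
      by (simp add: hd_rev last_rev)
  qed
  show ?thesis using le assms by (simp add: le_antisym)
qed

lemma dist_triangle:
  assumes "u \<in> V" "v \<in> V" "w \<in> V"
  shows "D u w \<le> D u v + D v w"
proof -
  obtain xs where xs: "walk V E xs" "hd xs = u" "last xs = v" "length xs = Suc (D u v)"
    using dist_witness assms by blast
  obtain ys where ys: "walk V E ys" "hd ys = v" "last ys = w" "length ys = Suc (D v w)"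
    using dist_witness assms by blast
  have "walk V E (xs @ tl ys)" using walk_join xs ys by metis
  moreover have "hd (xs @ tl ys) = u" using xs by (simp add: walk_def)
  moreover have "last (xs @ tl ys) = w" using xs ys
    by (cases ys) auto
  ultimately have "D u w \<le> length (xs @ tl ys) - 1" using dist_le by blast
  then show ?thesis using xs ys by simp
qed

lemma dist_edge: assumes "{u,v} \<in> E" shows "D u v \<le> 1"
  using dist_le[of "[u,v]" u v] edgeD[OF assms] assms by simp

lemma dist_0: assumes "u \<in> V" "v \<in> V" "D u v = 0" shows "u = v"
proof -
  obtain xs where xs: "walk V E xs" "hd xs = u" "last xs = v" "length xs = 1"
    using dist_witness[OF assms(1,2)] assms(3) by auto
  then show ?thesis by (cases xs) auto
qed

lemma dist_1: assumes "u \<in> V" "v \<in> V" "D u v = 1" shows "{u,v} \<in> E"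
proof -
  obtain xs where xs: "walk V E xs" "hd xs = u" "last xs = v" "length xs = 2"
    using dist_witness[OF assms(1,2)] assms(3) by auto
  then obtain a b where "xs = [a,b]"
    by (cases xs; cases "tl xs") auto
  then show ?thesis using xs by auto
qed

lemma dist_ge2: assumes "u \<in> V" "v \<in> V" "u \<noteq> v" "{u,v} \<notin> E" shows "D u v \<ge> 2"
proof -
  have "D u v \<noteq> 0" using dist_0 assms by blast
  moreover have "D u v \<noteq> 1" using dist_1 assms by blast
  ultimately show ?thesis by linarith
qed

lemma dist_prefix:
  assumes "walk V E xs" "hd xs = u" "i < length xs"
  shows "D u (xs ! i) \<le> i"
proof -
  have "walk V E (take (Suc i) xs)" using walk_take assms by blast
  moreover have "hd (take (Suc i) xs) = u" using assms by (simp add: walk_def hd_take)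
  moreover have "last (take (Suc i) xs) = xs ! i" using assms by (simp add: take_Suc_conv_app_nth)
  ultimately show ?thesis using dist_le[of "take (Suc i) xs"] assms by simp
qed

lemma dist_suffix:
  assumes "walk V E xs" "last xs = v" "i < length xs"
  shows "D (xs ! i) v \<le> length xs - 1 - i"
proof -
  have "walk V E (drop i xs)" using walk_drop assms by blast
  moreover have "hd (drop i xs) = xs ! i" using assms by (simp add: hd_drop_conv_nth)
  moreover have "last (drop i xs) = v" using assms by simp
  ultimately show ?thesis using dist_le[of "drop i xs"] assms by simp
qed

lemma potential_walk:
  fixes \<phi> :: "'a \<Rightarrow> int"
  assumes "\<And>a b. {a,b} \<in> E \<Longrightarrow> \<phi> b \<le> \<phi> a + 1" "walk V E xs"
  shows "\<phi> (last xs) \<le> \<phi> (hd xs) + int (length xs - 1)"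
  using assms(2)
proof (induction xs rule: induct_list012)
  case 1 then show ?case by (simp add: walk_def)
next
  case (2 x) then show ?case by simp
next
  case (3 x y zs)
  then have "\<phi> (last (y # zs)) \<le> \<phi> y + int (length (y # zs) - 1)" by simp
  moreover have "\<phi> y \<le> \<phi> x + 1" using 3 assms(1) by simp
  ultimately show ?case by simp
qed

lemma potential_dist:
  fixes \<phi> :: "'a \<Rightarrow> int"
  assumes "\<And>a b. {a,b} \<in> E \<Longrightarrow> \<phi> b \<le> \<phi> a + 1" "u \<in> V" "v \<in> V"
  shows "\<phi> v - \<phi> u \<le> int (D u v)"
proof -
  obtain xs where "walk V E xs" "hd xs = u" "last xs = v" "length xs = Suc (D u v)"
    using dist_witness assms by blast
  then show ?thesis using potential_walk[OF assms(1)] by fastforce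
qed

lemma dist_lip: assumes "{a,b} \<in> E" "u \<in> V" shows "D u b \<le> D u a + 1"
  using dist_triangle[of u a b] dist_edge[OF assms(1)] edgeD[OF assms(1)] assms(2) by simp

lemma parent_ex:
  assumes "v \<in> V" "x \<in> V" "v \<noteq> x"
  shows "\<exists>u. {u,v} \<in> E \<and> D x u + 1 = D x v"
proof -
  obtain xs where xs: "walk V E xs" "hd xs = x" "last xs = v" "length xs = Suc (D x v)"
    using dist_witness assms by blast
  have "D x v \<noteq> 0" using dist_0 assms by blast
  then obtain k where k: "D x v = Suc k" by (cases "D x v") auto
  let ?u = "xs ! k"
  have e: "{?u, v} \<in> E" using walk_edge[OF xs(1), of k] xs k by (simp add: last_conv_nth walk_def)
  have "D x ?u \<le> k" using dist_prefix[OF xs(1,2)] xs k by simp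
  moreover have "D x v \<le> D x ?u + 1" using dist_lip[OF e] assms by simp
  ultimately show ?thesis using e k by auto
qed

end



lemma walk_join_ends:
  assumes "walk V E xs" "walk V E ys" "last xs = hd ys"
  shows "walk V E (xs @ tl ys) \<and> hd (xs @ tl ys) = hd xs \<and> last (xs @ tl ys) = last ys"
proof -
  have "xs \<noteq> []" "ys \<noteq> []" using assms unfolding walk_def by auto
  then show ?thesis using walk_join[OF assms] assms(3) by (cases ys) auto
qed

lemma walk_snoc:
  assumes "walk V E (ys @ [b])" "ys \<noteq> []"
  shows "walk V E ys \<and> {last ys, b} \<in> E"
  using assms by (auto simp: walk_alt successively_append_iff)

lemma walk_restrict:
  assumes "walk V E xs" "\<And>i. Suc i < length xs \<Longrightarrow> {xs!i, xs!Suc i} \<in> E'" "set xs \<subseteq> V'"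
  shows "walk V' E' xs"
  using assms unfolding walk_def by blast

lemma connected_from_root:
  assumes "r \<in> V" "\<And>v. v \<in> V \<Longrightarrow> \<exists>xs. walk V E xs \<and> hd xs = r \<and> last xs = v"
  shows "connected_graph V E"
  unfolding connected_graph_def
proof (intro ballI)
  fix u v assume "u \<in> V" "v \<in> V"
  obtain xs where xs: "walk V E xs" "hd xs = r" "last xs = u" using assms \<open>u \<in> V\<close> by blast
  obtain ys where ys: "walk V E ys" "hd ys = r" "last ys = v" using assms \<open>v \<in> V\<close> by blast
  have r: "walk V E (rev xs)" "hd (rev xs) = u" "last (rev xs) = r"
    using xs walk_rev[OF xs(1)] by (auto simp: hd_rev last_rev)
  show "\<exists>xs. walk V E xs \<and> hd xs = u \<and> last xs = v"
    using walk_join_ends[OF r(1) ys(1)] r ys by metis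
qed

lemma reroute:
  assumes "walk V E xs" "walk V (E - {{a,b}}) ws" "hd ws = a" "last ws = b"
  shows "\<exists>ys. walk V (E - {{a,b}}) ys \<and> hd ys = hd xs \<and> last ys = last xs"
  using assms(1)
proof (induction xs rule: rev_induct)
  case Nil then show ?case by (simp add: walk_def)
next
  case (snoc c xs)
  show ?case
  proof (cases "xs = []")
    case True then show ?thesis using snoc.prems by (intro exI[of _ "[c]"]) simp
  next
    case False
    have w: "walk V E xs" "{last xs, c} \<in> E" using walk_snoc[OF snoc.prems False] by auto
    obtain ys where ys: "walk V (E - {{a,b}}) ys" "hd ys = hd xs" "last ys = last xs"
      using snoc.IH[OF w(1)] by blast
    have cV: "c \<in> V" using snoc.prems unfolding walk_def by auto
    show ?thesis
    proof (cases "{last xs, c} = {a,b}")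
      case False
      then have "walk V (E - {{a,b}}) (ys @ [c])"
        using walk_append[of V "E - {{a,b}}" ys "[c]"] ys w cV by simp
      moreover have "ys \<noteq> []" "xs \<noteq> []" using ys(1) w(1) unfolding walk_def by auto
      ultimately show ?thesis using ys False by (intro exI[of _ "ys @ [c]"]) simp
    next
      case True
      then have "(last xs = a \<and> c = b) \<or> (last xs = b \<and> c = a)" by (auto simp: doubleton_eq_iff)
      then obtain zs where zs: "walk V (E - {{a,b}}) zs" "hd zs = last xs" "last zs = c"
      proof
        assume "last xs = a \<and> c = b" then show thesis using that assms(2-4) by blast
      next
        assume h: "last xs = b \<and> c = a"
        have "walk V (E - {{a,b}}) (rev ws)" using walk_rev[OF assms(2)] .
        then show thesis using that h assms(3,4) assms(2) by (auto simp: hd_rev last_rev)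
      qed
      have "walk V (E - {{a,b}}) (ys @ tl zs) \<and> hd (ys @ tl zs) = hd ys \<and> last (ys @ tl zs) = last zs"
        using walk_join_ends[OF ys(1) zs(1)] ys zs by simp
      then show ?thesis using ys zs False by (intro exI[of _ "ys @ tl zs"]) simp
    qed
  qed
qed

lemma walk_delete_vertex:
  assumes "walk V E xs" "v \<notin> set xs"
  shows "walk (V - {v}) {e \<in> E. v \<notin> e} xs"
  using assms unfolding walk_def by (auto dest: nth_mem)

context cgraph begin

lemma shortest_inner:
  assumes "walk V E xs" "hd xs = s" "last xs = a" "length xs = Suc (D s a)"
    "i < length xs" "xs ! i \<noteq> a"
  shows "D s (xs ! i) < D s a"
proof -
  have "D s (xs ! i) \<le> i" using dist_prefix assms by blast
  moreover have "i \<noteq> length xs - 1" using assms by (metis last_conv_nth list.size(3) nat.distinct(1))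
  ultimately show ?thesis using assms by linarith
qed

end

lemma edges_lower:
  "sgraph V E \<Longrightarrow> connected_graph V E \<Longrightarrow> V \<noteq> {} \<Longrightarrow> card V \<le> Suc (card E)"
proof (induction "card V" arbitrary: V E rule: less_induct)
  case less
  interpret cgraph V E using less.prems by unfold_locales
  obtain r where r: "r \<in> V" using less.prems by blast
  show ?case
  proof (cases "V = {r}")
    case True then show ?thesis by simp
  next
    case False
    then obtain a where a: "a \<in> V" "a \<noteq> r" using r by blast
    define M where "M = Max (D r ` V)"
    have "M \<in> D r ` V" unfolding M_def using finV r by (intro Max_in) auto
    then obtain v where v: "v \<in> V" "D r v = M" by blast
    have maxv: "D r w \<le> D r v" if "w \<in> V" for w unfolding v M_def using finV that by simp
    have "D r a \<noteq> 0" using dist_0 a r by blast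
    then have "D r v \<noteq> 0" using maxv[OF a(1)] by linarith
    then have vr: "v \<noteq> r" using r by auto
    define V' where "V' = V - {v}"
    define E' where "E' = {e \<in> E. v \<notin> e}"
    have sg': "sgraph V' E'"
      unfolding sgraph_def V'_def E'_def
    proof (intro conjI ballI)
      show "finite (V - {v})" using finV by simp
      fix e assume e: "e \<in> {e \<in> E. v \<notin> e}"
      then obtain u w where "e = {u,w}" "u \<noteq> w" "u \<in> V" "w \<in> V" using sg unfolding sgraph_def by blast
      then show "\<exists>u w. e = {u, w} \<and> u \<noteq> w \<and> u \<in> V - {v} \<and> w \<in> V - {v}" using e by auto
    qed
    have avoid: "\<exists>xs. walk V' E' xs \<and> hd xs = r \<and> last xs = w" if w: "w \<in> V'" for w
    proof -
      have wV: "w \<in> V" "w \<noteq> v" using w unfolding V'_def by auto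
      obtain xs where xs: "walk V E xs" "hd xs = r" "last xs = w" "length xs = Suc (D r w)"
        using dist_witness[OF r wV(1)] by blast
      have "v \<notin> set xs"
      proof
        assume "v \<in> set xs"
        then obtain i where i: "i < length xs" "xs ! i = v" by (auto simp: in_set_conv_nth)
        have "D r v < D r w" using shortest_inner[OF xs i(1)] i wV by simp
        then show False using maxv[OF wV(1)] by simp
      qed
      then have "walk V' E' xs" unfolding V'_def E'_def using walk_delete_vertex[OF xs(1)] by blast
      then show ?thesis using xs by blast
    qed
    have conn': "connected_graph V' E'"
      using connected_from_root[of r V' E'] avoid r vr unfolding V'_def by blast
    have cardV: "card V = Suc (card V')" unfolding V'_def
      by (rule card_Suc_Diff1[symmetric, OF finV v(1)])
    have IH: "card V' \<le> Suc (card E')"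
      using less.hyps[OF _ sg' conn'] cardV r vr unfolding V'_def by auto
    obtain xs where xs: "walk V E xs" "hd xs = v" "last xs = r" "length xs = Suc (D v r)"
      using dist_witness[OF v(1) r] by blast
    have "length xs \<ge> 2"
    proof (rule ccontr)
      assume "\<not> length xs \<ge> 2"
      then have "length xs = 1" using xs(4) by simp
      then show False using xs vr by (cases xs) auto
    qed
    then obtain w ys where xsw: "xs = v # w # ys" using xs(2)
      by (cases xs; cases "tl xs") auto
    have ev: "{v,w} \<in> E" using xs(1) xsw by simp
    have "E' \<subset> E" unfolding E'_def using ev by blast
    then have "card E' < card E" using finE by (simp add: psubset_card_mono)
    then show ?thesis using IH cardV by simp
  qed
qed

locale tree = cgraph +
  assumes cardE: "card E = card V - 1"
begin

lemma no_detour: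
  assumes "{a,b} \<in> E" "walk V (E - {{a,b}}) ws" "hd ws = a" "last ws = b"
  shows False
proof -
  let ?E = "E - {{a,b}}"
  have sg': "sgraph V ?E" using sg unfolding sgraph_def by blast
  have conn': "connected_graph V ?E" unfolding connected_graph_def
  proof (intro ballI)
    fix u v assume "u \<in> V" "v \<in> V"
    then obtain xs where "walk V E xs" "hd xs = u" "last xs = v" using conn unfolding connected_graph_def by blast
    then show "\<exists>xs. walk V ?E xs \<and> hd xs = u \<and> last xs = v" using reroute[OF _ assms(2-4)] by metis
  qed
  have "V \<noteq> {}" using edgeD[OF assms(1)] by auto
  then have "card V \<le> Suc (card ?E)" using edges_lower[OF sg' conn'] by simp
  moreover have "card ?E = card E - 1" using assms(1) finE by simp
  moreover have "card E \<ge> 1" using assms(1) finE by (metis One_nat_def Suc_leI card_gt_0_iff empty_iff)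
  moreover have "card V \<ge> 1" using \<open>V \<noteq> {}\<close> finV by (simp add: Suc_leI card_gt_0_iff)
  ultimately show False using cardE by linarith
qed

lemma lower_nbr_unique:
  assumes "x \<in> V" "v \<in> V" "v \<noteq> x" "{u,v} \<in> E" "{u',v} \<in> E"
    "D x u \<le> D x v" "D x u' \<le> D x v"
  shows "u = u'"
proof (rule ccontr)
  assume ne: "u \<noteq> u'"
  have uV: "u \<in> V" "u' \<in> V" "u \<noteq> v" "u' \<noteq> v" using edgeD assms(4,5) by auto
  have avoid: "\<exists>xs. walk V E xs \<and> hd xs = x \<and> last xs = w \<and> v \<notin> set xs"
    if w: "w \<in> V" "w \<noteq> v" "D x w \<le> D x v" for w
  proof -
    obtain xs where xs: "walk V E xs" "hd xs = x" "last xs = w" "length xs = Suc (D x w)"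
      using dist_witness[OF assms(1) w(1)] by blast
    have "v \<notin> set xs"
    proof
      assume "v \<in> set xs"
      then obtain i where i: "i < length xs" "xs ! i = v" by (auto simp: in_set_conv_nth)
      have "D x v < D x w" using shortest_inner[OF xs i(1)] i w by simp
      then show False using w by simp
    qed
    then show ?thesis using xs by blast
  qed
  obtain xs where xs: "walk V E xs" "hd xs = x" "last xs = u" "v \<notin> set xs"
    using avoid[of u] uV assms by blast
  obtain ys where ys: "walk V E ys" "hd ys = x" "last ys = u'" "v \<notin> set ys"
    using avoid[of u'] uV assms by blast
  have r: "walk V E (rev xs)" "hd (rev xs) = u" "last (rev xs) = x"
    using xs walk_rev[OF xs(1)] by (auto simp: hd_rev last_rev)
  define zs where "zs = rev xs @ tl ys"
  have zs: "walk V E zs" "hd zs = u" "last zs = u'"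
    using walk_join_ends[OF r(1) ys(1)] r ys unfolding zs_def by auto
  have "v \<notin> set zs" unfolding zs_def using xs(4) ys(4) by (cases ys) auto
  have zs': "walk V (E - {{u,v}}) zs"
  proof (rule walk_restrict[OF zs(1)])
    fix i assume i: "Suc i < length zs"
    have "zs ! i \<in> set zs" "zs ! Suc i \<in> set zs" using i by auto
    then have "v \<notin> {zs ! i, zs ! Suc i}" using \<open>v \<notin> set zs\<close> by auto
    then show "{zs ! i, zs ! Suc i} \<in> E - {{u,v}}" using walk_edge[OF zs(1) i] by auto
  next
    show "set zs \<subseteq> V" using zs(1) unfolding walk_def by auto
  qed
  have "{last zs, hd [v]} \<in> E - {{u,v}}" using zs assms(5) ne uV by (auto simp: doubleton_eq_iff)
  then have "walk V (E - {{u,v}}) (zs @ [v])" using walk_append[OF zs'] assms(2) by simp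
  moreover have "hd (zs @ [v]) = u" using zs by (simp add: walk_def)
  ultimately show False using no_detour[OF assms(4), of "zs @ [v]"] by simp
qed

end



context cgraph begin

definition areach :: "'a \<Rightarrow> 'a \<Rightarrow> 'a \<Rightarrow> bool" where
  "areach x u v \<longleftrightarrow> (\<exists>xs. walk V E xs \<and> hd xs = u \<and> last xs = v \<and> x \<notin> set xs)"

lemma areach_V: "areach x u v \<Longrightarrow> u \<in> V \<and> v \<in> V \<and> u \<noteq> x \<and> v \<noteq> x"
  unfolding areach_def walk_def by (auto intro: hd_in_set last_in_set)

lemma areach_refl: "u \<in> V \<Longrightarrow> u \<noteq> x \<Longrightarrow> areach x u u"
  unfolding areach_def by (intro exI[of _ "[u]"]) simp

lemma areach_sym: assumes "areach x u v" shows "areach x v u"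
proof -
  obtain xs where xs: "walk V E xs" "hd xs = u" "last xs = v" "x \<notin> set xs" using assms areach_def by blast
  then show ?thesis unfolding areach_def using walk_rev[OF xs(1)]
    by (intro exI[of _ "rev xs"]) (auto simp: hd_rev last_rev)
qed

lemma areach_trans: assumes "areach x u v" "areach x v w" shows "areach x u w"
proof -
  obtain xs where xs: "walk V E xs" "hd xs = u" "last xs = v" "x \<notin> set xs" using assms areach_def by blast
  obtain ys where ys: "walk V E ys" "hd ys = v" "last ys = w" "x \<notin> set ys" using assms areach_def by blast
  have "x \<notin> set (xs @ tl ys)" using xs(4) ys(4) by (cases ys) auto
  then show ?thesis unfolding areach_def using walk_join_ends[OF xs(1) ys(1)] xs ys
    by (intro exI[of _ "xs @ tl ys"]) simp
qed

lemma areach_edge: "{u,v} \<in> E \<Longrightarrow> u \<noteq> x \<Longrightarrow> v \<noteq> x \<Longrightarrow> areach x u v"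
  unfolding areach_def using edgeD[of u v] by (intro exI[of _ "[u,v]"]) simp

lemma comp_iff: "u \<in> comp_minus V E x w \<longleftrightarrow> areach x w u"
  unfolding comp_minus_def areach_def by simp

lemma comp_self: "w \<in> V \<Longrightarrow> w \<noteq> x \<Longrightarrow> w \<in> comp_minus V E x w"
  using comp_iff areach_refl by blast

lemma comp_sub: "u \<in> comp_minus V E x w \<Longrightarrow> u \<in> V \<and> u \<noteq> x"
  using comp_iff areach_V by blast

lemma comp_areach: "u \<in> comp_minus V E x w \<Longrightarrow> v \<in> comp_minus V E x w \<Longrightarrow> areach x u v"
  using comp_iff areach_sym areach_trans by blast

lemma comp_closed: "u \<in> comp_minus V E x w \<Longrightarrow> areach x u v \<Longrightarrow> v \<in> comp_minus V E x w"
  using comp_iff areach_trans by blast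

lemma comp_edge: "u \<in> comp_minus V E x w \<Longrightarrow> {u,v} \<in> E \<Longrightarrow> v \<noteq> x \<Longrightarrow> v \<in> comp_minus V E x w"
  using comp_closed areach_edge comp_sub by blast

lemma comp_disj:
  assumes "comp_minus V E x w1 \<noteq> comp_minus V E x w2"
  shows "comp_minus V E x w1 \<inter> comp_minus V E x w2 = {}"
proof (rule ccontr)
  assume "comp_minus V E x w1 \<inter> comp_minus V E x w2 \<noteq> {}"
  then obtain z where z: "areach x w1 z" "areach x w2 z" using comp_iff by blast
  have "areach x w1 u \<longleftrightarrow> areach x w2 u" for u
  proof
    assume "areach x w1 u"
    then show "areach x w2 u" using areach_trans[OF areach_trans[OF z(2) areach_sym[OF z(1)]]] by blast
  next
    assume "areach x w2 u"
    then show "areach x w1 u" using areach_trans[OF areach_trans[OF z(1) areach_sym[OF z(2)]]] by blast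
  qed
  then show False using assms comp_iff by blast
qed

lemma comp_sep:
  assumes "u \<in> comp_minus V E x w" "v \<in> V" "v \<notin> comp_minus V E x w" "x \<in> V"
  shows "D u x + D x v \<le> D u v"
proof -
  have uV: "u \<in> V" using comp_sub assms by blast
  obtain xs where xs: "walk V E xs" "hd xs = u" "last xs = v" "length xs = Suc (D u v)"
    using dist_witness[OF uV assms(2)] by blast
  have "x \<in> set xs"
  proof (rule ccontr)
    assume "x \<notin> set xs"
    then have "areach x u v" unfolding areach_def using xs by blast
    then show False using comp_closed assms by blast
  qed
  then obtain i where i: "i < length xs" "xs ! i = x" by (auto simp: in_set_conv_nth)
  have "D u x \<le> i" using dist_prefix[OF xs(1,2) i(1)] i by simp
  moreover have "D x v \<le> length xs - 1 - i" using dist_suffix[OF xs(1,3) i(1)] i by simp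
  ultimately show ?thesis using xs(4) i(1) by simp
qed

lemma leaf_nbr: assumes "leaf V E v" obtains c where "{u \<in> V. {u,v} \<in> E} = {c}"
  using assms unfolding leaf_def degree_def by (auto simp: card_1_singleton_iff)

lemma leaf_unique: assumes "leaf V E v" "{a,v} \<in> E" "{c,v} \<in> E" shows "a = c"
proof -
  obtain d where d: "{u \<in> V. {u,v} \<in> E} = {d}" using leaf_nbr[OF assms(1)] by blast
  have "a \<in> {u \<in> V. {u,v} \<in> E}" "c \<in> {u \<in> V. {u,v} \<in> E}" using assms edgeD by auto
  then show ?thesis using d by auto
qed

lemma not_leaf2: assumes "{a,v} \<in> E" "{c,v} \<in> E" "a \<noteq> c" shows "\<not> leaf V E v"
  using leaf_unique assms by blast

lemma nonleaf_other:
  assumes "v \<in> V" "\<not> leaf V E v" "{a,v} \<in> E"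
  obtains c where "{c,v} \<in> E" "c \<noteq> a"
proof -
  have "card {u \<in> V. {u,v} \<in> E} \<noteq> 1" using assms unfolding leaf_def degree_def by simp
  moreover have "a \<in> {u \<in> V. {u,v} \<in> E}" using assms edgeD by auto
  ultimately have "{u \<in> V. {u,v} \<in> E} \<noteq> {a}" by auto
  then obtain c where "c \<in> {u \<in> V. {u,v} \<in> E}" "c \<noteq> a" using \<open>a \<in> _\<close> by blast
  then show ?thesis using that by blast
qed

lemma leaf_walk:
  assumes "leaf V E l" "{c,l} \<in> E" "walk V E xs" "hd xs = l" "c \<notin> set xs"
  shows "last xs = l"
proof (cases xs)
  case Nil then show ?thesis using assms by (simp add: walk_def)
next
  case (Cons a ys)
  show ?thesis
  proof (cases ys)
    case Nil then show ?thesis using Cons assms by simp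
  next
    case (Cons b zs)
    then have "{l, b} \<in> E" "b \<in> set xs" using \<open>xs = a # ys\<close> assms by auto
    then have "b = c" using leaf_unique[OF assms(1), of b c] assms(2) by (simp add: insert_commute)
    then show ?thesis using \<open>b \<in> set xs\<close> assms by simp
  qed
qed

end

locale comp_ctx = tree +
  fixes x w C y b p
  assumes xV: "x \<in> V" and xnl: "\<not> leaf V E x"
    and wV: "w \<in> V" "w \<noteq> x" and C_def: "C = comp_minus V E x w"
    and brooms: "card {v \<in> C. broom_vertex V E v} = 1"
    and yC: "y \<in> C" and yleaf: "leaf V E y" and by_edge: "{b,y} \<in> E" and p_def: "p = D x y"
begin

abbreviation "L \<equiv> {v \<in> C. leaf V E v}"

lemma yV: "y \<in> V" "y \<noteq> x" using comp_sub yC C_def by auto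

lemma Db: "D x b + 1 = p"
proof -
  obtain u where u: "{u,y} \<in> E" "D x u + 1 = D x y" using parent_ex[OF yV(1) xV yV(2)] by blast
  have "u = b" using leaf_unique[OF yleaf u(1) by_edge] .
  then show ?thesis using u p_def by simp
qed

lemma bV: "b \<in> V" using edgeD[OF by_edge] by simp

lemma p2: "p \<ge> 2"
proof (rule ccontr)
  assume "\<not> p \<ge> 2"
  then have "D x b = 0" using Db by simp
  then have bx: "b = x" using dist_0[OF xV bV] by simp
  obtain c where "{v \<in> C. broom_vertex V E v} = {c}" using brooms by (auto simp: card_1_singleton_iff)
  then have c: "c \<in> C" "broom_vertex V E c" by auto
  have "areach x y c" using comp_areach yC c(1) C_def by blast
  then obtain xs where xs: "walk V E xs" "hd xs = y" "last xs = c" "x \<notin> set xs" unfolding areach_def by blast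
  have "c = y" using leaf_walk[OF yleaf _ xs(1,2)] by_edge bx xs by simp
  then obtain l where l: "leaf V E l" "{y,l} \<in> E" using c unfolding broom_vertex_def by blast
  have "l = b" using leaf_unique[OF yleaf, of l b] l(2) by_edge by (simp add: insert_commute)
  then show False using l bx xnl by simp
qed

lemma bx: "b \<noteq> x" using Db p2 dist_self[OF xV] by auto

lemma bC: "b \<in> C" using comp_edge[OF _ _ bx] yC by_edge C_def by (simp add: insert_commute)

lemma broom_set: "{v \<in> C. broom_vertex V E v} = {b}"
proof -
  have "b \<in> {v \<in> C. broom_vertex V E v}" using bC bV yleaf by_edge unfolding broom_vertex_def by blast
  moreover obtain c where "{v \<in> C. broom_vertex V E v} = {c}" using brooms by (auto simp: card_1_singleton_iff)
  ultimately show ?thesis by auto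
qed

definition ws where "ws = (SOME xs. walk V E xs \<and> hd xs = x \<and> last xs = b \<and> length xs = Suc (D x b))"

lemma ws: "walk V E ws" "hd ws = x" "last ws = b" "length ws = p"
proof -
  have "\<exists>xs. walk V E xs \<and> hd xs = x \<and> last xs = b \<and> length xs = Suc (D x b)"
    using dist_witness[OF xV bV] .
  then have "walk V E ws \<and> hd ws = x \<and> last ws = b \<and> length ws = Suc (D x b)"
    unfolding ws_def by (rule someI_ex)
  then show "walk V E ws" "hd ws = x" "last ws = b" "length ws = p" using Db by auto
qed

definition z where "z j = ws ! j"

lemma z_depth: assumes "j \<le> p - 1" shows "D x (z j) = j" "D (z j) b = p - 1 - j" "z j \<in> V"
proof -
  have j: "j < length ws" using assms ws p2 by simp
  have zV: "z j \<in> V" using j ws(1) unfolding z_def walk_def by auto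
  have a: "D x (z j) \<le> j" using dist_prefix[OF ws(1,2) j] unfolding z_def .
  have b: "D (z j) b \<le> p - 1 - j" using dist_suffix[OF ws(1,3) j] ws(4) unfolding z_def by simp
  have "D x b \<le> D x (z j) + D (z j) b" using dist_triangle[OF xV zV bV] .
  then show "D x (z j) = j" "D (z j) b = p - 1 - j" "z j \<in> V" using a b Db zV assms by auto
qed

lemma z0: "z 0 = x" using ws unfolding z_def by (simp add: hd_conv_nth walk_def)
lemma zlast: "z (p - 1) = b" using ws p2 unfolding z_def by (simp add: last_conv_nth walk_def)

lemma z_edge: "j < p - 1 \<Longrightarrow> {z j, z (Suc j)} \<in> E"
  using walk_edge[OF ws(1), of j] ws p2 unfolding z_def by simp

lemma z_inj: "inj_on z {1..p-1}"
proof (rule inj_onI)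
  fix i j assume ij: "i \<in> {1..p-1}" "j \<in> {1..p-1}" "z i = z j"
  have "i = D x (z i)" using z_depth(1)[of i] ij(1) by simp
  also have "\<dots> = D x (z j)" using ij(3) by simp
  also have "\<dots> = j" using z_depth(1)[of j] ij(2) by simp
  finally show "i = j" .
qed

lemma z_C: assumes "1 \<le> j" "j \<le> p - 1" shows "z j \<in> C"
proof -
  have j: "j < length ws" using assms ws p2 by simp
  have "x \<notin> set (drop j ws)"
  proof
    assume "x \<in> set (drop j ws)"
    then obtain k where k: "k < length (drop j ws)" "drop j ws ! k = x" by (auto simp: in_set_conv_nth)
    then have "z (j + k) = x" "j + k \<le> p - 1" using ws j unfolding z_def by auto
    then show False using z_depth(1)[of "j+k"] assms dist_self[OF xV] by auto
  qed
  moreover have "walk V E (drop j ws)" using walk_drop[OF ws(1) j] .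
  moreover have "hd (drop j ws) = z j" using j unfolding z_def by (simp add: hd_drop_conv_nth)
  moreover have "last (drop j ws) = b" using j ws by simp
  ultimately have "areach x (z j) b" unfolding areach_def by blast
  then have "areach x b (z j)" using areach_sym by blast
  then show ?thesis using comp_closed bC C_def by blast
qed

lemma b_not_leaf: "\<not> leaf V E b"
proof -
  have s: "Suc (p-2) = p - 1" using p2 by simp
  have e: "{z (p - 2), b} \<in> E" using z_edge[of "p-2"] p2 zlast s by simp
  have "D x (z (p-2)) = p - 2" using z_depth(1)[of "p-2"] by simp
  moreover have "D x y = p" using p_def by simp
  ultimately have "z (p-2) \<noteq> y" using p2 by auto
  then show ?thesis using not_leaf2[of "z (p-2)" b y] e by_edge by (simp add: insert_commute)
qed

lemma leaves_at_b: assumes "l \<in> L" shows "{b,l} \<in> E" "D x l = p" "l \<in> V" "l \<noteq> x"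
proof -
  have lV: "l \<in> V" "l \<noteq> x" using assms comp_sub C_def by auto
  obtain c where c: "{u \<in> V. {u,l} \<in> E} = {c}" using leaf_nbr assms by blast
  then have cl: "{c,l} \<in> E" by auto
  have cb: "c = b"
  proof (cases "c = x")
    case True
    have "areach x l b" using comp_areach assms bC C_def by blast
    then obtain xs where xs: "walk V E xs" "hd xs = l" "last xs = b" "x \<notin> set xs" unfolding areach_def by blast
    have "b = l" using leaf_walk[of l c xs] assms cl xs True by simp
    then show ?thesis using b_not_leaf assms by simp
  next
    case False
    then have "c \<in> C" using comp_edge[where u=l and v=c and x=x and w=w] assms cl C_def by (simp add: insert_commute)
    moreover have "broom_vertex V E c" unfolding broom_vertex_def using assms cl edgeD[OF cl] by blast
    ultimately show ?thesis using broom_set by blast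
  qed
  show "{b,l} \<in> E" using cl cb by simp
  obtain u where u: "{u,l} \<in> E" "D x u + 1 = D x l" using parent_ex[OF lV(1) xV lV(2)] by blast
  have "u = b" using leaf_unique[of l u b] assms u(1) cl cb by simp
  then show "D x l = p" using u Db by simp
  show "l \<in> V" "l \<noteq> x" using lV by auto
qed

lemma Z_L_disj: "z ` {1..p-1} \<inter> L = {}"
proof (rule ccontr)
  assume "z ` {1..p-1} \<inter> L \<noteq> {}"
  then obtain j where j: "j \<in> {1..p-1}" "z j \<in> L" by blast
  have "D x (z j) = p" using leaves_at_b(2)[OF j(2)] .
  moreover have "D x (z j) = j" using z_depth(1)[of j] j(1) by simp
  ultimately show False using j(1) p2 by simp
qed

lemma C_struct: "C = z ` {1..p-1} \<union> L"
proof
  show "z ` {1..p-1} \<union> L \<subseteq> C" using z_C by auto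
next
  show "C \<subseteq> z ` {1..p-1} \<union> L"
  proof (rule ccontr)
    let ?S = "C - (z ` {1..p-1} \<union> L)"
    assume "\<not> C \<subseteq> z ` {1..p-1} \<union> L"
    then have Sne: "?S \<noteq> {}" by blast
    have "C \<subseteq> V" using comp_sub C_def by auto
    then have finC: "finite C" using finite_subset finV by auto
    have "Max (D x ` ?S) \<in> D x ` ?S" using Sne finC by (intro Max_in) auto
    then obtain v where v2: "Max (D x ` ?S) = D x v" and v1: "v \<in> ?S" by (rule imageE)
    note v = v1 v2[symmetric]
    have vmax: "D x u \<le> D x v" if "u \<in> ?S" for u using v(2) finC that by simp
    have vV: "v \<in> V" "v \<noteq> x" using v(1) comp_sub C_def by auto
    have vnl: "\<not> leaf V E v" using v(1) by auto
    obtain u where u: "{u,v} \<in> E" "D x u + 1 = D x v" using parent_ex[OF vV(1) xV vV(2)] by blast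
    obtain c where c: "{c,v} \<in> E" "c \<noteq> u" using nonleaf_other[OF vV(1) vnl u(1)] by blast
    have cV: "c \<in> V" using edgeD[OF c(1)] by simp
    have "D x c > D x v"
    proof (rule ccontr)
      assume "\<not> D x c > D x v"
      then have "c = u" using lower_nbr_unique[OF xV vV(1) vV(2) c(1) u(1)] u(2) by simp
      then show False using c(2) by simp
    qed
    moreover have "D x c \<le> D x v + 1" using dist_lip[of v c x] c(1) xV by (simp add: insert_commute)
    ultimately have dc: "D x c = D x v + 1" by simp
    have cx: "c \<noteq> x" using dc dist_self[OF xV] by auto
    have cC: "c \<in> C" using comp_edge[where u=v and v=c and x=x and w=w] v(1) c(1) cx C_def by (simp add: insert_commute)
    have "c \<notin> ?S" using vmax[of c] dc by auto
    then have "c \<in> z ` {1..p-1} \<or> c \<in> L" using cC by blast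
    then show False
    proof
      assume "c \<in> L"
      then have "{b,c} \<in> E" using leaves_at_b by blast
      then have "v = b" using leaf_unique[of c v b] \<open>c \<in> L\<close> c(1) by (simp add: insert_commute)
      moreover have "b \<in> z ` {1..p-1}" using zlast p2 by (intro image_eqI[of _ _ "p-1"]) auto
      ultimately show False using v(1) by blast
    next
      assume "c \<in> z ` {1..p-1}"
      then obtain j where j: "j \<in> {1..p-1}" "c = z j" by blast
      have dj: "D x c = j" using z_depth(1) j by simp
      have "D x v \<noteq> 0" using dist_0[OF xV vV(1)] vV(2) by auto
      then have vpos: "D x v \<ge> 1" by simp
      then have j2: "j \<ge> 2" using dj dc by simp
      have e: "{z (j-1), c} \<in> E" using z_edge[of "j-1"] j j2 by simp
      have "j - 1 \<le> p - 1" using j by auto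
      then have "D x (z (j-1)) = j - 1" using z_depth(1)[of "j-1"] by simp
      then have "z (j-1) = v"
        using lower_nbr_unique[OF xV _ cx e, of v] c(1) cV dj dc by (simp add: insert_commute)
      moreover have "z (j-1) \<in> z ` {1..p-1}" using j j2 by (intro imageI) auto
      ultimately show False using v(1) by blast
    qed
  qed
qed

lemma card_C: "card C = (p - 1) + card L"
proof -
  have "C \<subseteq> V" using comp_sub C_def by auto
  then have finC: "finite C" using finite_subset finV by auto
  have "card C = card (z ` {1..p-1}) + card L"
    using C_struct Z_L_disj finC card_Un_disjoint[of "z ` {1..p-1}" L] by simp
  then show ?thesis using card_image[OF z_inj] by simp
qed

end



locale mctx = tree +
  fixes x w1 w2 T1 T2 y1 y2 b1 b2 p
  assumes c1: "comp_ctx V E x w1 T1 y1 b1 p" and c2: "comp_ctx V E x w2 T2 y2 b2 p"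
    and T12: "T1 \<noteq> T2"

sublocale mctx \<subseteq> c1: comp_ctx V E x w1 T1 y1 b1 p by (rule c1)
sublocale mctx \<subseteq> c2: comp_ctx V E x w2 T2 y2 b2 p by (rule c2)

context mctx begin

abbreviation "E' \<equiv> move_edges E T2 b1"
abbreviation "D' \<equiv> gdist V E'"

lemma T12_disj: "T1 \<inter> T2 = {}"
  using comp_disj[of x w1 w2] T12 c1.C_def c2.C_def by simp

lemma b1T2: "b1 \<notin> T2" using c1.bC T12_disj by blast
lemma xT2: "x \<notin> T2" using comp_sub c2.C_def by blast
lemma T2V: "T2 \<subseteq> V" using comp_sub c2.C_def by blast
lemma T1V: "T1 \<subseteq> V" using comp_sub c1.C_def by blast

lemma edge_into_T2: assumes "{a,c} \<in> E" "a \<notin> T2" "c \<in> T2" shows "a = x"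
proof (rule ccontr)
  assume "a \<noteq> x"
  then have "a \<in> T2" using comp_edge[where u=c and v=a and x=x and w=w2] assms c2.C_def
    by (simp add: insert_commute)
  then show False using assms by simp
qed

lemma E'_cases:
  assumes "e \<in> E'"
  shows "(e \<in> E \<and> e \<inter> T2 = {}) \<or> (\<exists>v\<in>T2. e = {b1, v})"
  using assms unfolding move_edges_def by blast

lemma sg': "sgraph V E'"
  unfolding sgraph_def
proof (intro conjI ballI)
  show "finite V" using finV .
  fix e assume "e \<in> E'"
  then consider "e \<in> E" | v where "v \<in> T2" "e = {b1, v}" using E'_cases by blast
  then show "\<exists>u v. e = {u, v} \<and> u \<noteq> v \<and> u \<in> V \<and> v \<in> V"
  proof cases
    case 1 then show ?thesis using sg unfolding sgraph_def by blast
  next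
    case 2 then show ?thesis using b1T2 T2V c1.bV by blast
  qed
qed

lemma walk_E'_B:
  "v \<in> V - T2 \<Longrightarrow> D x v = k \<Longrightarrow> \<exists>xs. walk V E' xs \<and> hd xs = x \<and> last xs = v"
proof (induction k arbitrary: v)
  case 0
  then have "v = x" using dist_0[OF c1.xV] by auto
  then show ?case using c1.xV by (intro exI[of _ "[x]"]) simp
next
  case (Suc k)
  then have vV: "v \<in> V" "v \<notin> T2" "v \<noteq> x" using dist_self[OF c1.xV] by auto
  obtain u where u: "{u,v} \<in> E" "D x u + 1 = D x v" using parent_ex[OF vV(1) c1.xV vV(3)] by blast
  have uT2: "u \<notin> T2"
  proof
    assume "u \<in> T2"
    then have "v = x" using edge_into_T2[of v u] u(1) vV by (simp add: insert_commute)
    then show False using vV by simp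
  qed
  have uV: "u \<in> V" using edgeD[OF u(1)] by simp
  obtain xs where xs: "walk V E' xs" "hd xs = x" "last xs = u"
    using Suc.IH[of u] u uT2 uV Suc.prems by auto
  have "{u,v} \<in> E'" unfolding move_edges_def using u(1) uT2 vV by blast
  then have "walk V E' (xs @ [v])" using walk_append[OF xs(1), of "[v]"] xs(3) vV by simp
  moreover have "xs \<noteq> []" using xs(1) walk_def by blast
  ultimately show ?case using xs by (intro exI[of _ "xs @ [v]"]) simp
qed

lemma conn': "connected_graph V E'"
proof (rule connected_from_root[OF c1.xV])
  fix v assume vV: "v \<in> V"
  show "\<exists>xs. walk V E' xs \<and> hd xs = x \<and> last xs = v"
  proof (cases "v \<in> T2")
    case False then show ?thesis using walk_E'_B vV by blast
  next
    case True
    obtain xs where xs: "walk V E' xs" "hd xs = x" "last xs = b1"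
      using walk_E'_B[of b1] c1.bV b1T2 by blast
    have "{b1, v} \<in> E'" unfolding move_edges_def using True by blast
    then have "walk V E' (xs @ [v])" using walk_append[OF xs(1), of "[v]"] xs(3) vV by simp
    moreover have "xs \<noteq> []" using xs(1) walk_def by blast
    ultimately show ?thesis using xs by (intro exI[of _ "xs @ [v]"]) simp
  qed
qed

lemma cg': "cgraph V E'" using sg' conn' by unfold_locales

definition f2 where "f2 w = (if w \<in> T2 then b1 else w)"

lemma lowerB:
  assumes "v \<in> V" "v \<notin> T2" "w \<in> V"
  shows "int (D v (f2 w)) + (if w \<in> T2 then 1 else 0) \<le> int (D' v w)"
proof -
  define \<phi> where "\<phi> w = int (D v (f2 w)) + (if w \<in> T2 then 1 else 0)" for w
  have lip: "\<phi> c \<le> \<phi> a + 1" if e: "{a,c} \<in> E'" for a c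
  proof -
    consider "{a,c} \<in> E" "{a,c} \<inter> T2 = {}" | u where "u \<in> T2" "{a,c} = {b1, u}" using E'_cases[OF e] by blast
    then show ?thesis
    proof cases
      case 1
      then have "D v c \<le> D v a + 1" using dist_lip[OF 1(1) assms(1)] by simp
      then show ?thesis using 1 unfolding \<phi>_def f2_def by simp
    next
      case 2
      then have "(a = b1 \<and> c = u) \<or> (a = u \<and> c = b1)" by (auto simp: doubleton_eq_iff)
      then show ?thesis using 2 b1T2 unfolding \<phi>_def f2_def by auto
    qed
  qed
  have "\<phi> w - \<phi> v \<le> int (D' v w)" using cgraph.potential_dist[OF cg', of \<phi> v w] lip assms(1,3) by blast
  moreover have "\<phi> v = 0" unfolding \<phi>_def f2_def using assms by simp
  ultimately show ?thesis unfolding \<phi>_def by simp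
qed

lemma lowerBB: "v \<in> V - T2 \<Longrightarrow> w \<in> V - T2 \<Longrightarrow> D v w \<le> D' v w"
  using lowerB[of v w] unfolding f2_def by auto

lemma lowerBT: "v \<in> V - T2 \<Longrightarrow> w \<in> T2 \<Longrightarrow> int (D v b1) + 1 \<le> int (D' v w)"
  using lowerB[of v w] T2V unfolding f2_def by auto

lemma lowerTT: assumes "u \<in> T2" "w \<in> T2" "u \<noteq> w" shows "2 \<le> D' u w"
proof -
  have "{u,w} \<notin> E'"
  proof
    assume "{u,w} \<in> E'"
    then consider "{u,w} \<inter> T2 = {}" | v where "v \<in> T2" "{u,w} = {b1, v}" using E'_cases by blast
    then show False
    proof cases
      case 1 then show False using assms by auto
    next
      case 2 then have "b1 \<in> {u,w}" by auto
      then show False using assms b1T2 by auto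
    qed
  qed
  then show ?thesis using cgraph.dist_ge2[OF cg'] assms T2V by blast
qed

lemma D'_sym: "u \<in> V \<Longrightarrow> v \<in> V \<Longrightarrow> D' u v = D' v u"
  using cgraph.dist_sym[OF cg'] by blast

lemma D'_self: "u \<in> V \<Longrightarrow> D' u u = 0"
  using cgraph.dist_self[OF cg'] by blast

end



lemma gauss_int: "2 * (\<Sum>j\<in>{1..q::nat}. int j) = int q * (int q + 1)"
  by (induction q) (simp_all add: algebra_simps)

lemma sum_lin: "(\<Sum>j\<in>{1..q::nat}. a * int j + c) = a * (\<Sum>j\<in>{1..q}. int j) + int q * c"
  by (simp add: sum.distrib sum_distrib_left)

context comp_ctx begin

lemma finC: "finite C"
proof -
  have "C \<subseteq> V" using comp_sub C_def by auto
  then show ?thesis using finite_subset finV by auto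
qed

lemma finL: "finite L" using finC by simp

lemma sum_C:
  fixes f :: "'a \<Rightarrow> int"
  shows "sum f C = (\<Sum>j\<in>{1..p-1}. f (z j)) + sum f L"
proof -
  have "sum f C = sum f (z ` {1..p-1}) + sum f L"
    using C_struct Z_L_disj finL sum.union_disjoint[of "z ` {1..p-1}" L f] by simp
  moreover have "sum f (z ` {1..p-1}) = (\<Sum>j\<in>{1..p-1}. f (z j))"
    using sum.reindex[OF z_inj, of f] by simp
  ultimately show ?thesis by simp
qed

end

context mctx begin

definition q where "q = p - 1"
definition t1 where "t1 = card {v \<in> T1. leaf V E v}"
definition t2 where "t2 = card {v \<in> T2. leaf V E v}"
definition A where "A = V - T2 - T1"

lemma pq: "p = Suc q" using c1.p2 unfolding q_def by simp
lemma q1: "q \<ge> 1" using c1.p2 unfolding q_def by simp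

lemma m1: "card T1 = q + t1" using c1.card_C unfolding q_def t1_def by simp
lemma m2: "card T2 = q + t2" using c2.card_C unfolding q_def t2_def by simp

lemma finA: "finite A" unfolding A_def using finV by simp

lemma B_split: "V - T2 = A \<union> T1" "A \<inter> T1 = {}"
  unfolding A_def using T1V T12_disj by auto

lemma cardB: "card (V - T2) = card A + (q + t1)"
  using B_split finA c1.finC m1 by (simp add: card_Un_disjoint)

lemma Db1x: "D b1 x = q" "D x b1 = q"
  using c1.Db dist_sym[OF c1.bV c1.xV] unfolding q_def by auto

lemma h_A: assumes "u \<in> A" shows "int (D u x) - 1 - int (D u b1) \<le> - (int q + 1)"
proof -
  have uV: "u \<in> V" "u \<notin> T1" using assms unfolding A_def by auto
  have "D b1 x + D x u \<le> D b1 u"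
    using comp_sep[of b1 x w1 u] c1.bC c1.C_def uV c1.xV by simp
  then show ?thesis using Db1x dist_sym[OF uV(1) c1.xV] dist_sym[OF uV(1) c1.bV] by simp
qed

lemma h_z1: assumes "j \<in> {1..q}" shows "int (D (c1.z j) x) - 1 - int (D (c1.z j) b1) = 2 * int j - 1 - int q"
proof -
  have j: "j \<le> p - 1" using assms unfolding q_def by simp
  have zV: "c1.z j \<in> V" using c1.z_depth(3)[OF j] .
  have "D (c1.z j) x = j" using c1.z_depth(1)[OF j] dist_sym[OF zV c1.xV] by simp
  moreover have "D (c1.z j) b1 = q - j" using c1.z_depth(2)[OF j] unfolding q_def .
  ultimately show ?thesis using assms by (simp add: of_nat_diff)
qed

lemma h_L1: assumes "l \<in> {v \<in> T1. leaf V E v}" shows "int (D l x) - 1 - int (D l b1) \<le> int q - 1"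
proof -
  have lV: "l \<in> V" using c1.leaves_at_b(3) assms by blast
  have "D l x = p" using c1.leaves_at_b(2)[OF assms] dist_sym[OF lV c1.xV] by simp
  moreover have "l \<noteq> b1" using assms c1.b_not_leaf by auto
  then have "D l b1 \<noteq> 0" using dist_0[OF lV c1.bV] by auto
  ultimately show ?thesis using pq by simp
qed

lemma sum_h_B:
  "(\<Sum>u\<in>V-T2. int (D u x) - 1 - int (D u b1)) \<le> - (int q + 1) * int (card A) + int t1 * (int q - 1)"
proof -
  let ?h = "\<lambda>u. int (D u x) - 1 - int (D u b1)"
  have "(\<Sum>u\<in>V-T2. ?h u) = (\<Sum>u\<in>A. ?h u) + (\<Sum>u\<in>T1. ?h u)"
    using B_split finA c1.finC by (simp add: sum.union_disjoint)
  moreover have "(\<Sum>u\<in>A. ?h u) \<le> int (card A) * (- (int q + 1))"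
    using sum_bounded_above[of A ?h "- (int q + 1)"] h_A by simp
  moreover have "(\<Sum>u\<in>T1. ?h u) \<le> int t1 * (int q - 1)"
  proof -
    have "(\<Sum>u\<in>T1. ?h u) = (\<Sum>j\<in>{1..q}. ?h (c1.z j)) + (\<Sum>u\<in>{v \<in> T1. leaf V E v}. ?h u)"
      using c1.sum_C[of ?h] unfolding q_def by simp
    moreover have "(\<Sum>j\<in>{1..q}. ?h (c1.z j)) = (\<Sum>j\<in>{1..q}. 2 * int j + (- 1 - int q))"
      using h_z1 by (intro sum.cong) auto
    moreover have "\<dots> = 0" using sum_lin[of 2 "- 1 - int q" q] gauss_int[of q] by (simp add: algebra_simps)
    moreover have "(\<Sum>u\<in>{v \<in> T1. leaf V E v}. ?h u) \<le> int t1 * (int q - 1)"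
      using sum_bounded_above[of "{v \<in> T1. leaf V E v}" ?h "int q - 1"] h_L1 unfolding t1_def by simp
    ultimately show ?thesis by simp
  qed
  ultimately show ?thesis by (simp add: algebra_simps)
qed

lemma P2: "(\<Sum>v\<in>T2. int (D x v)) = (\<Sum>j\<in>{1..q}. int j) + int t2 * (int q + 1)"
proof -
  have "(\<Sum>v\<in>T2. int (D x v)) = (\<Sum>j\<in>{1..q}. int (D x (c2.z j))) + (\<Sum>v\<in>{v \<in> T2. leaf V E v}. int (D x v))"
    using c2.sum_C[of "\<lambda>v. int (D x v)"] unfolding q_def by simp
  moreover have "(\<Sum>j\<in>{1..q}. int (D x (c2.z j))) = (\<Sum>j\<in>{1..q}. int j)"
    using c2.z_depth(1) unfolding q_def by (intro sum.cong) auto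
  moreover have "(\<Sum>v\<in>{v \<in> T2. leaf V E v}. int (D x v)) = (\<Sum>v\<in>{v \<in> T2. leaf V E v}. int q + 1)"
    using c2.leaves_at_b(2) pq by (intro sum.cong) auto
  ultimately show ?thesis unfolding t2_def by simp
qed

lemma sum_delta: "(\<Sum>v\<in>T2. int (D v b2)) \<le> int q * int q - (\<Sum>j\<in>{1..q}. int j) + int t2"
proof -
  have "(\<Sum>v\<in>T2. int (D v b2)) = (\<Sum>j\<in>{1..q}. int (D (c2.z j) b2)) + (\<Sum>v\<in>{v \<in> T2. leaf V E v}. int (D v b2))"
    using c2.sum_C[of "\<lambda>v. int (D v b2)"] unfolding q_def by simp
  moreover have "(\<Sum>j\<in>{1..q}. int (D (c2.z j) b2)) = (\<Sum>j\<in>{1..q}. (-1) * int j + int q)"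
    using c2.z_depth(2) unfolding q_def by (intro sum.cong) (auto simp: of_nat_diff)
  moreover have "(\<Sum>v\<in>{v \<in> T2. leaf V E v}. int (D v b2)) \<le> int t2 * 1"
  proof -
    have "D v b2 \<le> 1" if "v \<in> {v \<in> T2. leaf V E v}" for v
      using dist_edge[of v b2] c2.leaves_at_b(1)[OF that] by (simp add: insert_commute)
    then show ?thesis using sum_bounded_above[of "{v \<in> T2. leaf V E v}" "\<lambda>v. int (D v b2)" 1]
      unfolding t2_def by force
  qed
  ultimately show ?thesis using sum_lin[of "-1" "int q" q] by simp
qed

end



context mctx begin

definition F where "F u v = int (D u v) - int (D' u v)"

lemma F_sym: "u \<in> V \<Longrightarrow> v \<in> V \<Longrightarrow> F u v = F v u"
  unfolding F_def using dist_sym D'_sym by simp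

lemma F_self: "u \<in> V \<Longrightarrow> F u u = 0"
  unfolding F_def using D'_self by simp

lemma BB: "(\<Sum>u\<in>V-T2. \<Sum>v\<in>V-T2. F u v) \<le> 0"
  by (intro sum_nonpos) (simp add: F_def lowerBB)

lemma cross:
  "(\<Sum>u\<in>V-T2. \<Sum>v\<in>T2. F u v) \<le>
     int (card (V - T2)) * ((\<Sum>j\<in>{1..q}. int j) + int t2 * (int q + 1))
     + int (q + t2) * (- (int q + 1) * int (card A) + int t1 * (int q - 1))"
proof -
  let ?h = "\<lambda>u. int (D u x) - 1 - int (D u b1)"
  let ?P = "(\<Sum>v\<in>T2. int (D x v))"
  have pw: "F u v \<le> int (D x v) + ?h u" if u: "u \<in> V - T2" and v: "v \<in> T2" for u v
  proof -
    have vV: "v \<in> V" using v T2V by auto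
    have "D u v \<le> D u x + D x v" using dist_triangle[of u x v] u vV c1.xV by simp
    moreover have "int (D u b1) + 1 \<le> int (D' u v)" using lowerBT u v by simp
    ultimately show ?thesis unfolding F_def by simp
  qed
  have "(\<Sum>u\<in>V-T2. \<Sum>v\<in>T2. F u v) \<le> (\<Sum>u\<in>V-T2. \<Sum>v\<in>T2. int (D x v) + ?h u)"
    using pw by (intro sum_mono) auto
  also have "\<dots> = (\<Sum>u\<in>V-T2. ?P + int (card T2) * ?h u)"
    by (simp add: sum.distrib)
  also have "\<dots> = int (card (V - T2)) * ?P + int (card T2) * (\<Sum>u\<in>V-T2. ?h u)"
    by (simp add: sum.distrib sum_distrib_left)
  also have "\<dots> \<le> int (card (V - T2)) * ?P + int (card T2) * (- (int q + 1) * int (card A) + int t1 * (int q - 1))"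
    using sum_h_B by (intro add_left_mono mult_left_mono) auto
  finally show ?thesis using P2 m2 by simp
qed

lemma TT:
  "(\<Sum>u\<in>T2. \<Sum>v\<in>T2. F u v) \<le>
     2 * (int (q + t2) - 1) * (int q * int q - (\<Sum>j\<in>{1..q}. int j) + int t2) - 2 * int (q + t2) * (int (q + t2) - 1)"
proof -
  let ?d = "\<lambda>v. int (D v b2)"
  let ?S = "(\<Sum>v\<in>T2. ?d v)"
  let ?m = "int (card T2)"
  have fin: "finite T2" using c2.finC c2.C_def by simp
  have inner: "(\<Sum>v\<in>T2. F u v) \<le> (?m - 2) * ?d u - 2 * (?m - 1) + ?S" if u: "u \<in> T2" for u
  proof -
    have uV: "u \<in> V" using u T2V by auto
    have "(\<Sum>v\<in>T2. F u v) = F u u + (\<Sum>v\<in>T2-{u}. F u v)" using sum.remove[OF fin u] .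
    also have "\<dots> = (\<Sum>v\<in>T2-{u}. F u v)" using F_self[OF uV] by simp
    also have "\<dots> \<le> (\<Sum>v\<in>T2-{u}. ?d u + ?d v - 2)"
    proof (intro sum_mono)
      fix v assume v: "v \<in> T2 - {u}"
      have vV: "v \<in> V" using v T2V by auto
      have "D u v \<le> D u b2 + D b2 v" using dist_triangle[OF uV c2.bV vV] .
      moreover have "D b2 v = D v b2" using dist_sym[OF c2.bV vV] .
      moreover have "2 \<le> D' u v" using lowerTT[of u v] u v by auto
      ultimately show "F u v \<le> ?d u + ?d v - 2" unfolding F_def by simp
    qed
    also have "\<dots> = (\<Sum>v\<in>T2-{u}. ?d v + (?d u - 2))"
      by (intro sum.cong) auto
    also have "\<dots> = int (card (T2 - {u})) * (?d u - 2) + (\<Sum>v\<in>T2-{u}. ?d v)"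
      by (simp add: sum.distrib)
    also have "(\<Sum>v\<in>T2-{u}. ?d v) = ?S - ?d u" using sum.remove[OF fin u, of ?d] by simp
    also have "int (card (T2 - {u})) = ?m - 1"
    proof -
      have "card T2 > 0" using u fin card_gt_0_iff by blast
      then show ?thesis using u fin by (simp add: of_nat_diff)
    qed
    finally show ?thesis by (simp add: algebra_simps)
  qed
  have "(\<Sum>u\<in>T2. \<Sum>v\<in>T2. F u v) \<le> (\<Sum>u\<in>T2. (?m - 2) * ?d u - 2 * (?m - 1) + ?S)"
    using inner by (intro sum_mono) auto
  also have "\<dots> = (\<Sum>u\<in>T2. (?m - 2) * ?d u + (?S - 2 * (?m - 1)))"
    by (intro sum.cong) auto
  also have "\<dots> = (?m - 2) * ?S + ?m * (?S - 2 * (?m - 1))"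
    by (simp add: sum.distrib sum_distrib_left)
  also have "\<dots> = 2 * (?m - 1) * ?S - 2 * ?m * (?m - 1)"
    by (simp add: algebra_simps)
  also have "\<dots> \<le> 2 * (?m - 1) * (int q * int q - (\<Sum>j\<in>{1..q}. int j) + int t2) - 2 * ?m * (?m - 1)"
  proof -
    have "?m \<ge> 1" using m2 q1 by simp
    then show ?thesis using sum_delta by (intro diff_right_mono mult_left_mono) auto
  qed
  finally show ?thesis using m2 by simp
qed

lemma total:
  "int (\<Sum>u\<in>V. \<Sum>v\<in>V. D u v) - int (\<Sum>u\<in>V. \<Sum>v\<in>V. D' u v) \<le>
     2 * (int (card (V - T2)) * ((\<Sum>j\<in>{1..q}. int j) + int t2 * (int q + 1))
     + int (q + t2) * (- (int q + 1) * int (card A) + int t1 * (int q - 1)))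
     + (2 * (int (q + t2) - 1) * (int q * int q - (\<Sum>j\<in>{1..q}. int j) + int t2) - 2 * int (q + t2) * (int (q + t2) - 1))"
proof -
  have fin: "finite T2" using c2.finC c2.C_def by simp
  have split: "\<And>g :: 'a \<Rightarrow> int. sum g V = sum g (V - T2) + sum g T2"
    using sum.subset_diff[OF T2V finV] by simp
  have "int (\<Sum>u\<in>V. \<Sum>v\<in>V. D u v) - int (\<Sum>u\<in>V. \<Sum>v\<in>V. D' u v) = (\<Sum>u\<in>V. \<Sum>v\<in>V. F u v)"
    unfolding F_def by (simp add: sum_subtractf)
  also have "\<dots> = (\<Sum>u\<in>V. (\<Sum>v\<in>V-T2. F u v) + (\<Sum>v\<in>T2. F u v))"
    using split by simp
  also have "\<dots> = (\<Sum>u\<in>V-T2. \<Sum>v\<in>V-T2. F u v) + (\<Sum>u\<in>V-T2. \<Sum>v\<in>T2. F u v)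
               + ((\<Sum>u\<in>T2. \<Sum>v\<in>V-T2. F u v) + (\<Sum>u\<in>T2. \<Sum>v\<in>T2. F u v))"
    using split by (simp add: sum.distrib)
  also have "(\<Sum>u\<in>T2. \<Sum>v\<in>V-T2. F u v) = (\<Sum>u\<in>V-T2. \<Sum>v\<in>T2. F u v)"
  proof -
    have "(\<Sum>u\<in>T2. \<Sum>v\<in>V-T2. F u v) = (\<Sum>v\<in>V-T2. \<Sum>u\<in>T2. F u v)" by (rule sum.swap)
    also have "\<dots> = (\<Sum>v\<in>V-T2. \<Sum>u\<in>T2. F v u)"
      using F_sym T2V by (intro sum.cong refl) auto
    finally show ?thesis .
  qed
  finally have eq: "int (\<Sum>u\<in>V. \<Sum>v\<in>V. D u v) - int (\<Sum>u\<in>V. \<Sum>v\<in>V. D' u v) =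
     (\<Sum>u\<in>V-T2. \<Sum>v\<in>V-T2. F u v) + 2 * (\<Sum>u\<in>V-T2. \<Sum>v\<in>T2. F u v) + (\<Sum>u\<in>T2. \<Sum>v\<in>T2. F u v)"
    by simp
  have "(\<Sum>u\<in>V-T2. \<Sum>v\<in>V-T2. F u v) + 2 * (\<Sum>u\<in>V-T2. \<Sum>v\<in>T2. F u v) + (\<Sum>u\<in>T2. \<Sum>v\<in>T2. F u v)
    \<le> 0 + 2 * (int (card (V - T2)) * ((\<Sum>j\<in>{1..q}. int j) + int t2 * (int q + 1))
     + int (q + t2) * (- (int q + 1) * int (card A) + int t1 * (int q - 1)))
     + (2 * (int (q + t2) - 1) * (int q * int q - (\<Sum>j\<in>{1..q}. int j) + int t2) - 2 * int (q + t2) * (int (q + t2) - 1))"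
    by (intro add_mono mult_left_mono BB cross TT) simp_all
  then show ?thesis unfolding eq by simp
qed

end



lemma K_bound:
  fixes n q t1 t2 :: int
  assumes hX: "n \<ge> 2*t1*t2 + 2*t1 + 2*t2 + 4" and ht: "t1 = t2 \<or> t1 = t2 + 1"
    and hp: "(q+4)^2 \<le> 8*(n-1)" and hn0: "n \<ge> 1636"
  shows "n - 4*(t1+t2) - 3 \<ge> 4*q"
proof -
  define u where "u = t1 + t2"
  have u2: "u^2 \<le> 4*t1*t2 + 1" using ht unfolding u_def by (auto simp: power2_eq_square algebra_simps)
  have i1: "(u+2)^2 < 2*n" using u2 hX unfolding u_def by (simp add: power2_eq_square algebra_simps)
  have i2: "(q+4)^2 < 4*(2*n)" using hp by simp
  define s where "s = sqrt (real_of_int (2*n))"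
  have n0: "0 \<le> n" using hn0 by linarith
  have s0: "s \<ge> 0" unfolding s_def using n0 by simp
  have ss: "s * s = real_of_int (2*n)" unfolding s_def using n0 by simp
  have r1: "real_of_int (u+2) < s"
  proof -
    have "(real_of_int (u+2))^2 < real_of_int (2*n)" using i1 by (metis of_int_less_iff of_int_power)
    then show ?thesis unfolding s_def by (rule real_less_rsqrt)
  qed
  have r2: "real_of_int (q+4) / 2 < s"
  proof -
    have "(real_of_int (q+4))^2 < 4 * real_of_int (2*n)" using i2 by (metis of_int_less_iff of_int_power of_int_mult of_int_numeral)
    then have "(real_of_int (q+4) / 2)^2 < real_of_int (2*n)" by (simp add: power_divide)
    then show ?thesis unfolding s_def by (rule real_less_rsqrt)
  qed
  have s24: "24 \<le> s"
  proof -
    have "(24::real)^2 \<le> real_of_int (2*n)" using hn0 by simp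
    then show ?thesis unfolding s_def by (rule real_le_rsqrt)
  qed
  have "24 * s \<le> s * s" using s24 s0 by (intro mult_right_mono) auto
  then have "real_of_int (4*u + 4*q + 3) < real_of_int n" using r1 r2 ss by simp
  then show ?thesis unfolding u_def by simp
qed

lemma arith_main:
  fixes n q t1 t2 a g :: int
  assumes hn: "n = a + (q + t1) + (q + t2)" and hg: "2*g = q*(q+1)" and q1: "q \<ge> 1"
    and hb: "-1 \<le> 2 * ((a + (q + t1)) * (g + t2 * (q + 1)) + (q + t2) * (- (q + 1) * a + t1 * (q - 1)))
       + (2 * ((q + t2) - 1) * (q * q - g + t2) - 2 * (q + t2) * ((q + t2) - 1))"
    and hp: "(q+4)^2 \<le> 8*(n-1)" and hn0: "n \<ge> 1636" and ht: "t1 = t2 \<or> t1 = t2 + 1"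
  shows "n \<le> 2*t1*t2 + 2*t1 + 2*t2 + 3"
proof (rule ccontr)
  assume neg: "\<not> n \<le> 2*t1*t2 + 2*t1 + 2*t2 + 3"
  define X where "X = n - (2*t1*t2 + 2*t1 + 2*t2 + 3)"
  define Y where "Y = t1*t2 - t1 - t2"
  have X1: "X \<ge> 1" using neg unfolding X_def by simp
  have id: "2 * ((a + (q + t1)) * (g + t2 * (q + 1)) + (q + t2) * (- (q + 1) * a + t1 * (q - 1)))
       + (2 * ((q + t2) - 1) * (q * q - g + t2) - 2 * (q + t2) * ((q + t2) - 1))
     = - q*(q+1)*X - 2*q*(q-1)*Y + 4*q*q*(q-1)"
    unfolding X_def Y_def using hn hg by algebra
  show False
  proof (cases "q = 1")
    case True
    then show ?thesis using hb id X1 by simp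
  next
    case False
    then have q2: "q \<ge> 2" using q1 by simp
    have K: "X + 2*Y \<ge> 4*q"
      using K_bound[of t1 t2 n q] X1 ht hp hn0 unfolding X_def Y_def by (simp add: algebra_simps)
    have "(q-1)*(X + 2*Y) \<ge> (q-1)*(4*q)" using K q2 by (intro mult_left_mono) auto
    then have br: "(q+1)*X + 2*(q-1)*Y - 4*q*(q-1) \<ge> 2" using X1 by (simp add: algebra_simps)
    have "q * ((q+1)*X + 2*(q-1)*Y - 4*q*(q-1)) \<ge> q * 2" using br q2 by (intro mult_left_mono) auto
    then have "- q*(q+1)*X - 2*q*(q-1)*Y + 4*q*q*(q-1) \<le> -2*q" by (simp add: algebra_simps)
    then show ?thesis using hb id q2 by simp
  qed
qed




theorem mainTheorem9:
  fixes V :: "'a set" and E :: "'a set set" and x y1 y2 y1' :: 'a and T1 T2 :: "'a set"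
    and n d p t1 t2 :: nat
  assumes "max_wiener_tree V E"
    and "n = card V" and "d = diameter V E"
    and "special_vertex V E x"
    and "special_pair V E x T1 T2"
    and "y1 \<in> T1" and "leaf V E y1" and "y2 \<in> T2" and "leaf V E y2"
    and "broom_vertex V E y1'" and "{y1', y1} \<in> E"
    and "p = gdist V E x y1" and "p = gdist V E x y2"
    and "t1 = card {v \<in> T1. leaf V E v}" and "t2 = card {v \<in> T2. leaf V E v}"
    and "n \<ge> 1636"
    and "real p \<le> 4 * sqrt ((real n - 1) / 2) - 3"
    and "wiener V E \<ge> wiener V (move_edges E T2 y1')"
  shows "(t1 = t2 \<longrightarrow> int t1 \<ge> \<lceil>sqrt ((real n - 1) / 2)\<rceil> - 1) \<and>
         (t1 = t2 + 1 \<longrightarrow> int t1 \<ge> \<lceil>sqrt ((real n - 1/2) / 2) - 1/2\<rceil>)"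
proof -
  note hyp = assms
  have it: "is_tree V E" using hyp(1) unfolding max_wiener_tree_def by blast
  interpret tree V E using it unfolding is_tree_def by unfold_locales auto
  have xV: "x \<in> V" and dx: "degree V E x \<ge> 3" using hyp(4) unfolding special_vertex_def by auto
  have xnl: "\<not> leaf V E x" using dx unfolding leaf_def by simp
  have sp: "T1 \<in> components_minus V E x" "T2 \<in> components_minus V E x" "T1 \<noteq> T2"
    "card {v \<in> T1. broom_vertex V E v} = 1" "card {v \<in> T2. broom_vertex V E v} = 1"
    using hyp(5) unfolding special_pair_def by auto
  obtain w1 where w1: "w1 \<in> V - {x}" "T1 = comp_minus V E x w1"
    using sp(1) unfolding components_minus_def by blast
  obtain w2 where w2: "w2 \<in> V - {x}" "T2 = comp_minus V E x w2"
    using sp(2) unfolding components_minus_def by blast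
  obtain b2 where b2: "{u \<in> V. {u,y2} \<in> E} = {b2}" using leaf_nbr[OF hyp(9)] by blast
  then have b2e: "{b2, y2} \<in> E" by auto
  have tr: "tree V E" using it unfolding is_tree_def by unfold_locales auto
  have cc1: "comp_ctx V E x w1 T1 y1 y1' p"
    unfolding comp_ctx_def comp_ctx_axioms_def using tr xV xnl w1 sp(4) hyp(6,7,11,12) by auto
  have cc2: "comp_ctx V E x w2 T2 y2 b2 p"
    unfolding comp_ctx_def comp_ctx_axioms_def using tr xV xnl w2 sp(5) hyp(8,9,13) b2e by auto
  have mc: "mctx V E x w1 w2 T1 T2 y1 y2 y1' b2 p"
    unfolding mctx_def mctx_axioms_def using tr cc1 cc2 sp(3) by blast
  interpret M: mctx V E x w1 w2 T1 T2 y1 y2 y1' b2 p by (rule mc)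
  let ?S = "\<Sum>u\<in>V. \<Sum>v\<in>V. gdist V E u v"
  let ?S' = "\<Sum>u\<in>V. \<Sum>v\<in>V. gdist V (move_edges E T2 y1') u v"
  have "?S' div 2 \<le> ?S div 2" using hyp(18) unfolding wiener_def .
  moreover have "\<And>a b :: nat. b div 2 \<le> a div 2 \<Longrightarrow> b \<le> a + 1" by presburger
  ultimately have SS: "?S' \<le> ?S + 1" by blast
  note tot = M.total
  have t1d: "M.t1 = t1" "M.t2 = t2" using hyp(14,15) unfolding M.t1_def M.t2_def by auto
  define g where "g = (\<Sum>j\<in>{1..M.q}. int j)"
  have hg: "2 * g = int M.q * (int M.q + 1)" unfolding g_def by (rule gauss_int)
  have cV: "card V = card (V - T2) + card T2"
    using card_Diff_subset[OF _ M.T2V] M.c2.finC M.c2.C_def card_mono[OF finV M.T2V] by simp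
  have hn: "int n = int (card M.A) + (int M.q + int t1) + (int M.q + int t2)"
    using cV M.cardB M.m2 hyp(2) t1d by simp
  have hb: "-1 \<le> 2 * ((int (card M.A) + (int M.q + int t1)) * (g + int t2 * (int M.q + 1))
      + (int M.q + int t2) * (- (int M.q + 1) * int (card M.A) + int t1 * (int M.q - 1)))
       + (2 * ((int M.q + int t2) - 1) * (int M.q * int M.q - g + int t2) - 2 * (int M.q + int t2) * ((int M.q + int t2) - 1))"
  proof -
    have d: "-1 \<le> int ?S - int ?S'" using SS by linarith
    from order_trans[OF d tot] show ?thesis using M.cardB t1d unfolding g_def by simp
  qed
  have hp: "(int M.q + 4)^2 \<le> 8 * (int n - 1)"
  proof -
    have n1: "real n \<ge> 1" using hyp(16) by simp
    have r0: "0 \<le> (real n - 1) / 2" using n1 by simp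
    have "real p + 3 \<le> 4 * sqrt ((real n - 1) / 2)" using hyp(17) by simp
    then have "(real p + 3)^2 \<le> (4 * sqrt ((real n - 1) / 2))^2" by (intro power_mono) auto
    also have "\<dots> = 16 * ((real n - 1) / 2)" using r0 by (simp add: power_mult_distrib)
    finally have "(real p + 3)^2 \<le> 8 * (real n - 1)" by simp
    moreover have "real p + 3 = real_of_int (int M.q + 4)" using M.pq by simp
    ultimately have "real_of_int ((int M.q + 4)^2) \<le> real_of_int (8 * (int n - 1))"
      using n1 by simp
    then show ?thesis by (simp only: of_int_le_iff)
  qed
  have main: "int n \<le> 2 * int t1 * int t2 + 2 * int t1 + 2 * int t2 + 3" if ht: "t1 = t2 \<or> t1 = t2 + 1"
    using arith_main[OF hn hg _ hb hp _ ] M.q1 hyp(16) ht by auto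
  show ?thesis
  proof (intro conjI impI)
    assume e: "t1 = t2"
    then have "int n \<le> 2 * int t1 * int t1 + 4 * int t1 + 3" using main by simp
    then have "real_of_int (int n) \<le> real_of_int (2 * int t1 * int t1 + 4 * int t1 + 3)" by (simp only: of_int_le_iff)
    then have "real n \<le> 2 * real t1 * real t1 + 4 * real t1 + 3" by simp
    then have "(real n - 1) / 2 \<le> (real t1 + 1)^2" by (simp add: power2_eq_square algebra_simps)
    then have "sqrt ((real n - 1) / 2) \<le> real t1 + 1" by (intro real_le_lsqrt) auto
    then have "\<lceil>sqrt ((real n - 1) / 2)\<rceil> \<le> int t1 + 1" by (simp add: ceiling_le_iff)
    then show "int t1 \<ge> \<lceil>sqrt ((real n - 1) / 2)\<rceil> - 1" by simp
  next
    assume e: "t1 = t2 + 1"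
    then have "int n \<le> 2 * int t1 * int t1 + 2 * int t1 + 1" using main by (simp add: algebra_simps)
    then have "real_of_int (int n) \<le> real_of_int (2 * int t1 * int t1 + 2 * int t1 + 1)" by (simp only: of_int_le_iff)
    then have "real n \<le> 2 * real t1 * real t1 + 2 * real t1 + 1" by simp
    then have "(real n - 1/2) / 2 \<le> (real t1 + 1/2)^2" by (simp add: power2_eq_square algebra_simps)
    then have "sqrt ((real n - 1/2) / 2) \<le> real t1 + 1/2" by (intro real_le_lsqrt) auto
    then have "\<lceil>sqrt ((real n - 1/2) / 2) - 1/2\<rceil> \<le> int t1" by (simp add: ceiling_le_iff)
    then show "int t1 \<ge> \<lceil>sqrt ((real n - 1/2) / 2) - 1/2\<rceil>" by simp
  qed
qed



end
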